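(* Let $\Gamma$ be a network zero-sum game with a fully-mixed Nash equilibrium $x^*$ with rational coordinates such that $\sum_{j\neq i}A^{(ij)}x_j^*=\mathbf{0}$ for every agent $i$. Suppose the regularizers used in Stochastic FTRL satisfy $\nabla h_i^*(y_i)>\mathbf{0}$ (coordinatewise) for all $y\in\mathcal{Y}$ and all $i\in\mathcal{N}$. Then the Markov chain with state space $\mathcal{Y}$ and transition probabilities $\bar P$ is irreducible.
   Context: A network game has agents $\mathcal{N}=\{1,\dots,N\}$, finite pure strategy sets $\mathcal{S}_i$, simplices $\mathcal{X}_i$ of mixed strategies, $\mathcal{S}=\prod_i\mathcal{S}_i$, and payoff matrices $A^{(ij)}\in\mathbb{R}^{S_i\times S_j}$ ($i\ne j$); agent $i$'s expected payoff under $x$ is $\langle x_i,\sum_{j\ne i}A^{(ij)}x_j\rangle$. It is network zero-sum if $A^{(ij)}=-(A^{(ji)})^\top$. A Nash equilibrium $x^*$ satisfies $\langle x_i^*,\sum_{j\ne i}A^{(ij)}x_j^*\rangle\ge\langle x_i,\sum_{j\ne i}A^{(ij)}x_j^*\rangle$ for all $x_i\in\mathcal{X}_i$, $i$; it is fully mixed if all coordinates are positive. Each agent has a strictly convex regularizer $h_i$ on $\mathcal{X}_i$ (learning rate absorbed), conjugate $h_i^*(y_i)=\sup_{x_i\in\mathcal{X}_i}\{\langle y_i,x_i\rangle-h_i(x_i)\}$, and $\nabla h_i^*(y_i)=\arg\max_{x_i\in\mathcal{X}_i}\{\langle y_i,x_i\rangle-h_i(x_i)\}$ is the strategy played at payoff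 vector $y_i$. Fix an initial $y^0=(y_1^0,\dots,y_N^0)$. Define $\mathcal{Y}^0=\{y^0\}$ and $\mathcal{Y}^t=\{(y_i+\sum_{j\neq i}A^{(ij)}e_{s_j})_{i\in\mathcal{N}}: y\in\mathcal{Y}^{t-1},\ s\in\mathcal{S}\}$, and $\mathcal{Y}=\bigcup_{t\ge0}\mathcal{Y}^t$. The transition probabilities are $\bar P(y,y')=\sum_{s\in\mathcal{S}:\ y_i'=y_i+\sum_{j\ne i}A^{(ij)}e_{s_j}\ \forall i}\ \prod_{j=1}^N x_{js_j}$, where $x_j=\nabla h_j^*(y_j)$. *)

theory Defs
  imports "HOL-Analysis.Analysis" "HOL-Library.FuncSet"
begin

text \<open>Agents are 0,...,n-1; agent i has pure strategies 0,...,m i - 1.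
  Vectors indexed by pure strategies of agent i are functions nat => real of which only
  the coordinates below m i are relevant. A i j k l is the (k,l) entry of the payoff
  matrix of agent i against agent j.\<close>

definition strat_simplex :: "nat \<Rightarrow> (nat \<Rightarrow> real) set" where
  "strat_simplex d = {x. (\<forall>k<d. 0 \<le> x k) \<and> (\<Sum>k<d. x k) = 1 \<and> (\<forall>k\<ge>d. x k = 0)}"

definition ip :: "nat \<Rightarrow> (nat \<Rightarrow> real) \<Rightarrow> (nat \<Rightarrow> real) \<Rightarrow> real" where
  "ip d u v = (\<Sum>k<d. u k * v k)"

definition strictly_convex_on :: "(nat \<Rightarrow> real) set \<Rightarrow> ((nat \<Rightarrow> real) \<Rightarrow> real) \<Rightarrow> bool" where
  "strictly_convex_on S f \<longleftrightarrow>
     (\<forall>x\<in>S. \<forall>y\<in>S. \<forall>t::real. 0 < t \<and> t < 1 \<longrightarrow> (\<lambda>k. (1 - t) * x k + t * y k) \<in> S) \<and>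
     (\<forall>x\<in>S. \<forall>y\<in>S. x \<noteq> y \<longrightarrow> (\<forall>t::real. 0 < t \<and> t < 1 \<longrightarrow>
        f (\<lambda>k. (1 - t) * x k + t * y k) < (1 - t) * f x + t * f y))"

text \<open>Gradient of the convex conjugate: the maximiser of <y,x> - h x over the strat_simplex.\<close>
definition grad_conj :: "nat \<Rightarrow> ((nat \<Rightarrow> real) \<Rightarrow> real) \<Rightarrow> (nat \<Rightarrow> real) \<Rightarrow> (nat \<Rightarrow> real)" where
  "grad_conj d h y = (THE x. x \<in> strat_simplex d \<and>
      (\<forall>x'\<in>strat_simplex d. ip d y x' - h x' \<le> ip d y x - h x))"

definition network_zero_sum ::
  "nat \<Rightarrow> (nat \<Rightarrow> nat) \<Rightarrow> (nat \<Rightarrow> nat \<Rightarrow> nat \<Rightarrow> nat \<Rightarrow> real) \<Rightarrow> bool" where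
  "network_zero_sum n m A \<longleftrightarrow> (\<forall>i<n. \<forall>j<n. i \<noteq> j \<longrightarrow>
      (\<forall>k<m i. \<forall>l<m j. A i j k l = - A j i l k))"

definition payoff_vec ::
  "nat \<Rightarrow> (nat \<Rightarrow> nat) \<Rightarrow> (nat \<Rightarrow> nat \<Rightarrow> nat \<Rightarrow> nat \<Rightarrow> real) \<Rightarrow> (nat \<Rightarrow> nat \<Rightarrow> real)
     \<Rightarrow> nat \<Rightarrow> nat \<Rightarrow> real" where
  "payoff_vec n m A x i k = (\<Sum>j\<in>{0..<n}-{i}. \<Sum>l<m j. A i j k l * x j l)"

definition nash_eq ::
  "nat \<Rightarrow> (nat \<Rightarrow> nat) \<Rightarrow> (nat \<Rightarrow> nat \<Rightarrow> nat \<Rightarrow> nat \<Rightarrow> real) \<Rightarrow> (nat \<Rightarrow> nat \<Rightarrow> real) \<Rightarrow> bool" where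
  "nash_eq n m A xs \<longleftrightarrow> (\<forall>i<n. xs i \<in> strat_simplex (m i)) \<and>
     (\<forall>i<n. \<forall>x\<in>strat_simplex (m i).
        ip (m i) (xs i) (payoff_vec n m A xs i) \<ge> ip (m i) x (payoff_vec n m A xs i))"

definition fully_mixed :: "nat \<Rightarrow> (nat \<Rightarrow> nat) \<Rightarrow> (nat \<Rightarrow> nat \<Rightarrow> real) \<Rightarrow> bool" where
  "fully_mixed n m xs \<longleftrightarrow> (\<forall>i<n. \<forall>k<m i. xs i k > 0)"

definition profiles :: "nat \<Rightarrow> (nat \<Rightarrow> nat) \<Rightarrow> (nat \<Rightarrow> nat) set" where
  "profiles n m = PiE {0..<n} (\<lambda>i. {0..<m i})"

definition step ::
  "nat \<Rightarrow> (nat \<Rightarrow> nat) \<Rightarrow> (nat \<Rightarrow> nat \<Rightarrow> nat \<Rightarrow> nat \<Rightarrow> real) \<Rightarrow> (nat \<Rightarrow> nat \<Rightarrow> real)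
     \<Rightarrow> (nat \<Rightarrow> nat) \<Rightarrow> (nat \<Rightarrow> nat \<Rightarrow> real)" where
  "step n m A y s = (\<lambda>i k. if i < n \<and> k < m i
       then y i k + (\<Sum>j\<in>{0..<n}-{i}. A i j k (s j)) else y i k)"

fun reach_t ::
  "nat \<Rightarrow> (nat \<Rightarrow> nat) \<Rightarrow> (nat \<Rightarrow> nat \<Rightarrow> nat \<Rightarrow> nat \<Rightarrow> real) \<Rightarrow> (nat \<Rightarrow> nat \<Rightarrow> real)
     \<Rightarrow> nat \<Rightarrow> (nat \<Rightarrow> nat \<Rightarrow> real) set" where
  "reach_t n m A y0 0 = {y0}"
| "reach_t n m A y0 (Suc t) = {step n m A y s | y s. y \<in> reach_t n m A y0 t \<and> s \<in> profiles n m}"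

definition reach ::
  "nat \<Rightarrow> (nat \<Rightarrow> nat) \<Rightarrow> (nat \<Rightarrow> nat \<Rightarrow> nat \<Rightarrow> nat \<Rightarrow> real) \<Rightarrow> (nat \<Rightarrow> nat \<Rightarrow> real)
     \<Rightarrow> (nat \<Rightarrow> nat \<Rightarrow> real) set" where
  "reach n m A y0 = (\<Union>t. reach_t n m A y0 t)"

definition Pbar ::
  "nat \<Rightarrow> (nat \<Rightarrow> nat) \<Rightarrow> (nat \<Rightarrow> nat \<Rightarrow> nat \<Rightarrow> nat \<Rightarrow> real)
     \<Rightarrow> (nat \<Rightarrow> (nat \<Rightarrow> real) \<Rightarrow> real)
     \<Rightarrow> (nat \<Rightarrow> nat \<Rightarrow> real) \<Rightarrow> (nat \<Rightarrow> nat \<Rightarrow> real) \<Rightarrow> real" where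
  "Pbar n m A h y y' =
     (\<Sum>s\<in>{s\<in>profiles n m. step n m A y s = y'}.
        \<Prod>j<n. grad_conj (m j) (h j) (y j) (s j))"

fun Pstep :: "'a set \<Rightarrow> ('a \<Rightarrow> 'a \<Rightarrow> real) \<Rightarrow> nat \<Rightarrow> 'a \<Rightarrow> 'a \<Rightarrow> real" where
  "Pstep S P 0 y y' = (if y = y' then 1 else 0)"
| "Pstep S P (Suc t) y y' = (\<Sum>\<^sub>\<infinity>z\<in>S. P y z * Pstep S P t z y')"

definition irreducible_chain :: "'a set \<Rightarrow> ('a \<Rightarrow> 'a \<Rightarrow> real) \<Rightarrow> bool" where
  "irreducible_chain S P \<longleftrightarrow> (\<forall>y\<in>S. \<forall>y'\<in>S. \<exists>t. Pstep S P t y y' > 0)"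

end

theory Submission
  imports Defs
begin

definition inc :: "nat \<Rightarrow> (nat \<Rightarrow> nat) \<Rightarrow> (nat \<Rightarrow> nat \<Rightarrow> nat \<Rightarrow> nat \<Rightarrow> real) \<Rightarrow> (nat \<Rightarrow> nat)
     \<Rightarrow> nat \<Rightarrow> nat \<Rightarrow> real" where
  "inc n m A s = (\<lambda>i k. if i < n \<and> k < m i then (\<Sum>j\<in>{0..<n}-{i}. A i j k (s j)) else 0)"

lemma step_inc: "step n m A y s = (\<lambda>i k. y i k + inc n m A s i k)"
  by (auto simp: step_def inc_def fun_eq_iff)

lemma fold_step: "foldl (step n m A) w rs = (\<lambda>i k. w i k + sum_list (map (\<lambda>r. inc n m A r i k) rs))"
  by (induction rs arbitrary: w) (auto simp: step_inc fun_eq_iff algebra_simps)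

definition Erel where
  "Erel n m A = {(y, step n m A y s) | y s. s \<in> profiles n m}"

lemma fold_E: "set rs \<subseteq> profiles n m \<Longrightarrow> (w, foldl (step n m A) w rs) \<in> (Erel n m A)\<^sup>*"
proof (induction rs arbitrary: w)
  case Nil then show ?case by simp
next
  case (Cons r rs)
  have "(w, step n m A w r) \<in> Erel n m A" using Cons.prems by (auto simp: Erel_def)
  moreover have "(step n m A w r, foldl (step n m A) (step n m A w r) rs) \<in> (Erel n m A)\<^sup>*"
    using Cons by auto
  ultimately show ?case by simp
qed

lemma sum_list_rep: "sum_list (map (f::nat \<Rightarrow> real) (concat (map (\<lambda>l. replicate (c l) l) [0..<M])))
   = (\<Sum>l<M. real (c l) * f l)"
  by (induction M) (auto simp: sum_list_replicate)

lemma length_rep: "length (concat (map (\<lambda>l. replicate (c l) l) [0..<M])) = (\<Sum>l<M. c l)"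
  by (induction M) auto

lemma set_rep: "set (concat (map (\<lambda>l. replicate (c l) l) [0..<M])) = {l. l < M \<and> c l > 0}"
  by auto

lemma sum_nth_list: "(\<Sum>u<length xs. (f::nat\<Rightarrow>real) (xs ! u)) = sum_list (map f xs)"
  by (simp add: sum_list_sum_nth[of "map f xs"] atLeast0LessThan)

lemma cycle:
  fixes c :: "nat \<Rightarrow> nat \<Rightarrow> nat" and D :: nat
  assumes csum: "\<forall>j<n. (\<Sum>l<m j. c j l) = D"
    and cpos: "\<forall>j<n. \<forall>l<m j. c j l \<ge> 1"
    and cbal: "\<forall>i<n. \<forall>k<m i. (\<Sum>j\<in>{0..<n}-{i}. \<Sum>l<m j. real (c j l) * A i j k l) = 0"
    and s: "s \<in> profiles n m"
  shows "(step n m A w s, w) \<in> (Erel n m A)\<^sup>*"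
proof -
  define L where "L j = concat (map (\<lambda>l. replicate (c j l) l) [0..<m j])" for j
  define L' where "L' j = remove1 (s j) (L j)" for j
  define rest where "rest = map (\<lambda>u j. if j < n then L' j ! u else undefined) [0..<D-1]"
  have sj: "j < n \<Longrightarrow> s j < m j" for j using s by (auto simp: profiles_def PiE_def Pi_def)
  have lenL: "j < n \<Longrightarrow> length (L j) = D" for j using csum by (simp add: L_def length_rep)
  have memL: "j < n \<Longrightarrow> s j \<in> set (L j)" for j
    using sj[of j] cpos by (force simp: L_def)
  have lenL': "j < n \<Longrightarrow> length (L' j) = D - 1" for j
    using lenL memL by (simp add: L'_def length_remove1)
  have setL': "j < n \<Longrightarrow> set (L' j) \<subseteq> {0..<m j}" for j
    unfolding L'_def L_def using set_remove1_subset by fastforce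
  have rest_prof: "set rest \<subseteq> profiles n m"
  proof
    fix r assume "r \<in> set rest"
    then obtain u where u: "u < D - 1" and r: "r = (\<lambda>j. if j < n then L' j ! u else undefined)"
      by (auto simp: rest_def)
    have "L' j ! u < m j" if j: "j < n" for j
    proof -
      have "L' j ! u \<in> set (L' j)" using lenL'[OF j] u by simp
      then show ?thesis using setL'[OF j] by auto
    qed
    then show "r \<in> profiles n m" by (auto simp: profiles_def r PiE_def Pi_def extensional_def)
  qed
  have key: "inc n m A s i k + sum_list (map (\<lambda>r. inc n m A r i k) rest) = 0" for i k
  proof (cases "i < n \<and> k < m i")
    case False
    then have "inc n m A r i k = 0" for r by (auto simp add: inc_def)
    then show ?thesis by simp
  next
    case True
    let ?J = "{0..<n}-{i}"
    have "sum_list (map (\<lambda>r. inc n m A r i k) rest)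
        = (\<Sum>u<D-1. \<Sum>j\<in>?J. A i j k (L' j ! u))"
      using True by (simp add: rest_def inc_def interv_sum_list_conv_sum_set_nat atLeast0LessThan)
    also have "\<dots> = (\<Sum>j\<in>?J. \<Sum>u<D-1. A i j k (L' j ! u))" by (rule sum.swap)
    also have "\<dots> = (\<Sum>j\<in>?J. sum_list (map (A i j k) (L' j)))"
    proof (rule sum.cong)
      fix j assume "j \<in> ?J"
      then have "length (L' j) = D - 1" using lenL' by auto
      then show "(\<Sum>u<D-1. A i j k (L' j ! u)) = sum_list (map (A i j k) (L' j))"
        using sum_nth_list[of "A i j k" "L' j"] by simp
    qed simp
    finally have 1: "sum_list (map (\<lambda>r. inc n m A r i k) rest) = (\<Sum>j\<in>?J. sum_list (map (A i j k) (L' j)))" .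
    have "inc n m A s i k + sum_list (map (\<lambda>r. inc n m A r i k) rest)
       = (\<Sum>j\<in>?J. A i j k (s j) + sum_list (map (A i j k) (L' j)))"
    proof -
      have "inc n m A s i k = (\<Sum>j\<in>?J. A i j k (s j))" using True by (simp add: inc_def)
      then show ?thesis unfolding 1 by (simp add: sum.distrib)
    qed
    also have "\<dots> = (\<Sum>j\<in>?J. sum_list (map (A i j k) (L j)))"
      by (rule sum.cong) (auto simp: L'_def sum_list_map_remove1[OF memL, symmetric])
    also have "\<dots> = (\<Sum>j\<in>?J. \<Sum>l<m j. real (c j l) * A i j k l)"
      by (simp add: L_def sum_list_rep)
    also have "\<dots> = 0" using cbal True by auto
    finally show ?thesis .
  qed
  have "foldl (step n m A) (step n m A w s) rest = w"
    by (simp add: fold_step step_inc fun_eq_iff add.assoc key)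
  with fold_E[OF rest_prof, of "step n m A w s" A] show ?thesis by simp
qed


lemma reach_step:
  assumes "y \<in> reach n m A y0" "s \<in> profiles n m"
  shows "step n m A y s \<in> reach n m A y0"
proof -
  obtain t where "y \<in> reach_t n m A y0 t" using assms(1) by (auto simp: reach_def)
  then have "step n m A y s \<in> reach_t n m A y0 (Suc t)" using assms(2) by auto
  then show ?thesis unfolding reach_def by blast
qed

lemma E_reach:
  assumes "(y, z) \<in> (Erel n m A)\<^sup>*" "y \<in> reach n m A y0"
  shows "z \<in> reach n m A y0"
  using assms by (induction rule: rtrancl_induct) (auto simp: Erel_def intro: reach_step)

lemma y0_to:
  "y \<in> reach_t n m A y0 t \<Longrightarrow> (y0, y) \<in> (Erel n m A)\<^sup>*"
proof (induction t arbitrary: y)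
  case 0 then show ?case by simp
next
  case (Suc t)
  then obtain z s where z: "z \<in> reach_t n m A y0 t" "s \<in> profiles n m" "y = step n m A z s" by auto
  then have "(z, y) \<in> Erel n m A" by (auto simp: Erel_def)
  with Suc.IH[OF z(1)] show ?case by simp
qed

lemma to_y0:
  fixes c :: "nat \<Rightarrow> nat \<Rightarrow> nat" and D :: nat
  assumes csum: "\<forall>j<n. (\<Sum>l<m j. c j l) = D"
    and cpos: "\<forall>j<n. \<forall>l<m j. c j l \<ge> 1"
    and cbal: "\<forall>i<n. \<forall>k<m i. (\<Sum>j\<in>{0..<n}-{i}. \<Sum>l<m j. real (c j l) * A i j k l) = 0"
  shows "y \<in> reach_t n m A y0 t \<Longrightarrow> (y, y0) \<in> (Erel n m A)\<^sup>*"
proof (induction t arbitrary: y)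
  case 0 then show ?case by simp
next
  case (Suc t)
  then obtain z s where z: "z \<in> reach_t n m A y0 t" "s \<in> profiles n m" "y = step n m A z s" by auto
  have "(y, z) \<in> (Erel n m A)\<^sup>*" using cycle[OF csum cpos cbal z(2)] z(3) by simp
  with Suc.IH[OF z(1)] show ?case by simp
qed

lemma Pstep_Suc_pos:
  fixes S :: "'a set" and P :: "'a \<Rightarrow> 'a \<Rightarrow> real"
  assumes fin: "finite F" and FS: "F \<subseteq> S" and zero: "\<And>w. w \<in> S - F \<Longrightarrow> P y w = 0"
    and nn: "\<And>w. w \<in> F \<Longrightarrow> 0 \<le> P y w \<and> 0 \<le> Pstep S P t w y'"
    and z: "z \<in> F" "P y z > 0" "Pstep S P t z y' > 0"
  shows "Pstep S P (Suc t) y y' > 0"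
proof -
  have "Pstep S P (Suc t) y y' = infsum (\<lambda>w. P y w * Pstep S P t w y') F"
    by simp (rule infsum_cong_neutral, use FS zero in auto)
  also have "\<dots> = (\<Sum>w\<in>F. P y w * Pstep S P t w y')" using fin by simp
  also have "\<dots> > 0"
    by (rule sum_pos2[OF fin z(1)]) (use z nn in auto)
  finally show ?thesis .
qed

theorem theorem4:
  fixes n :: nat and m :: "nat \<Rightarrow> nat"
    and A :: "nat \<Rightarrow> nat \<Rightarrow> nat \<Rightarrow> nat \<Rightarrow> real"
    and h :: "nat \<Rightarrow> (nat \<Rightarrow> real) \<Rightarrow> real"
    and xs :: "nat \<Rightarrow> nat \<Rightarrow> real"
    and y0 :: "nat \<Rightarrow> nat \<Rightarrow> real"
  assumes strat_nonempty: "\<forall>i<n. m i \<ge> 1"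
    and zero_sum: "network_zero_sum n m A"
    and nash: "nash_eq n m A xs"
    and mixed: "fully_mixed n m xs"
    and rational: "\<forall>i<n. \<forall>k<m i. xs i k \<in> \<rat>"
    and balanced: "\<forall>i<n. \<forall>k<m i. payoff_vec n m A xs i k = 0"
    and reg_convex: "\<forall>i<n. strictly_convex_on (strat_simplex (m i)) (h i)"
    and reg_max: "\<forall>i<n. \<forall>y. \<exists>x\<in>strat_simplex (m i).
                    \<forall>x'\<in>strat_simplex (m i). ip (m i) y x' - h i x' \<le> ip (m i) y x - h i x"
    and reg_pos: "\<forall>y\<in>reach n m A y0. \<forall>i<n. \<forall>k<m i. grad_conj (m i) (h i) (y i) k > 0"
  shows "irreducible_chain (reach n m A y0) (Pbar n m A h)"
proof -
  let ?S = "reach n m A y0" and ?P = "Pbar n m A h" and ?E = "Erel n m A"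
  have exd: "\<exists>d::nat. d > 0 \<and> real d * xs i k \<in> \<int>" if "i < n" "k < m i" for i k
  proof -
    have "xs i k \<in> \<rat>" using rational that by blast
    then obtain a b where ab: "b > 0" "coprime a b" "xs i k = of_int a / of_int b"
      by (rule Rats_cases')
    then have "real (nat b) * xs i k = of_int a" by simp
    then show ?thesis using ab(1) by (intro exI[of _ "nat b"]) (auto simp del: of_int_of_nat_eq)
  qed
  define d where "d i k = (SOME d::nat. d > 0 \<and> real d * xs i k \<in> \<int>)" for i k
  have d: "d i k > 0 \<and> real (d i k) * xs i k \<in> \<int>" if "i < n" "k < m i" for i k
    unfolding d_def by (rule someI_ex[OF exd[OF that]])
  define D where "D = (\<Prod>i<n. \<Prod>k<m i. d i k)"
  have exc: "\<exists>c::nat. real c = real D * xs i k \<and> c \<ge> 1" if "i < n" "k < m i" for i k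
  proof -
    have "d i k dvd (\<Prod>k<m i. d i k)" by (rule dvd_prodI) (use that in auto)
    also have "\<dots> dvd D" unfolding D_def by (rule dvd_prodI) (use that in auto)
    finally obtain q where q: "D = d i k * q" by (auto simp: dvd_def)
    have "real D * xs i k = real q * (real (d i k) * xs i k)" by (simp add: q)
    also have "\<dots> \<in> \<int>" using d[OF that] by (intro Ints_mult[of "real q"] Ints_of_nat) auto
    finally obtain z where z: "real D * xs i k = of_int z" by (auto elim: Ints_cases)
    have Dpos: "D > 0" unfolding D_def using d by (auto intro!: prod_pos)
    have "real D * xs i k > 0" using mixed that Dpos by (auto simp: fully_mixed_def)
    then have "z > 0" using z by simp
    then show ?thesis using z by (intro exI[of _ "nat z"]) auto
  qed
  define c where "c i k = (SOME c::nat. real c = real D * xs i k \<and> c \<ge> 1)" for i k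
  have c: "real (c i k) = real D * xs i k \<and> c i k \<ge> 1" if "i < n" "k < m i" for i k
    unfolding c_def by (rule someI_ex[OF exc[OF that]])
  have csum: "\<forall>j<n. (\<Sum>l<m j. c j l) = D"
  proof (intro allI impI)
    fix j assume j: "j < n"
    have "real (\<Sum>l<m j. c j l) = (\<Sum>l<m j. real D * xs j l)" using c j by simp
    also have "\<dots> = real D * (\<Sum>l<m j. xs j l)" by (simp add: sum_distrib_left)
    also have "\<dots> = real D" using nash j by (simp add: nash_eq_def strat_simplex_def)
    finally show "(\<Sum>l<m j. c j l) = D" by linarith
  qed
  have cpos: "\<forall>j<n. \<forall>l<m j. c j l \<ge> 1" using c by auto
  have cbal: "\<forall>i<n. \<forall>k<m i. (\<Sum>j\<in>{0..<n}-{i}. \<Sum>l<m j. real (c j l) * A i j k l) = 0"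
  proof (intro allI impI)
    fix i k assume ik: "i < n" "k < m i"
    have "(\<Sum>j\<in>{0..<n}-{i}. \<Sum>l<m j. real (c j l) * A i j k l)
        = (\<Sum>j\<in>{0..<n}-{i}. \<Sum>l<m j. real D * (A i j k l * xs j l))"
      by (intro sum.cong refl) (use c in auto)
    also have "\<dots> = real D * payoff_vec n m A xs i k"
      by (simp add: payoff_vec_def sum_distrib_left)
    also have "\<dots> = 0" using balanced ik by simp
    finally show "(\<Sum>j\<in>{0..<n}-{i}. \<Sum>l<m j. real (c j l) * A i j k l) = 0" .
  qed
  have prof_fin: "finite (profiles n m)" by (simp add: profiles_def finite_PiE)
  have gpos: "0 < (\<Prod>j<n. grad_conj (m j) (h j) (y j) (s j))" if "y \<in> ?S" "s \<in> profiles n m" for y s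
  proof (rule prod_pos)
    fix j assume "j \<in> {..<n}"
    then have "j < n" "s j < m j" using that(2) by (auto simp: profiles_def PiE_def Pi_def)
    then show "0 < grad_conj (m j) (h j) (y j) (s j)" using reg_pos that(1) by auto
  qed
  have Pnn: "0 \<le> ?P y w" if "y \<in> ?S" for y w
    unfolding Pbar_def by (rule sum_nonneg) (use gpos[OF that] in \<open>auto intro: less_imp_le\<close>)
  have Pzero: "?P y w = 0" if "w \<notin> step n m A y ` profiles n m" for y w
  proof -
    have "{s \<in> profiles n m. step n m A y s = w} = {}" using that by auto
    then show ?thesis unfolding Pbar_def by (simp only: sum.empty)
  qed
  have Ppos: "?P y (step n m A y s) > 0" if "y \<in> ?S" "s \<in> profiles n m" for y s
    unfolding Pbar_def
    by (rule sum_pos2[where i=s]) (use prof_fin that gpos in \<open>auto intro: less_imp_le\<close>)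
  have Pstep_nn: "0 \<le> Pstep ?S ?P t z y'" if "z \<in> ?S" for t z y'
    using that
  proof (induction t arbitrary: z)
    case 0 then show ?case by simp
  next
    case (Suc t)
    show ?case by simp (rule infsum_nonneg, use Suc Pnn in auto)
  qed
  have path: "(y, y') \<in> ?E\<^sup>* \<Longrightarrow> y \<in> ?S \<Longrightarrow> \<exists>t. Pstep ?S ?P t y y' > 0" for y y'
  proof (induction rule: converse_rtrancl_induct)
    case base
    show ?case by (intro exI[of _ 0]) simp
  next
    case (step y z)
    then obtain s where s: "s \<in> profiles n m" "z = step n m A y s" by (auto simp: Erel_def)
    have zS: "z \<in> ?S" using step.prems s by (simp add: reach_step)
    then obtain t where t: "Pstep ?S ?P t z y' > 0" using step.IH by blast
    let ?F = "?S \<inter> step n m A y ` profiles n m"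
    have "Pstep ?S ?P (Suc t) y y' > 0"
    proof (rule Pstep_Suc_pos[where F = ?F and z = z])
      show "finite ?F" using prof_fin by simp
      show "z \<in> ?F" using zS s by auto
      show "?P y z > 0" using Ppos step.prems s by simp
    qed (use t Pzero Pnn step.prems Pstep_nn in auto)
    then show ?case by blast
  qed
  show ?thesis
    unfolding irreducible_chain_def
  proof (intro ballI)
    fix y y' assume y: "y \<in> ?S" and y': "y' \<in> ?S"
    obtain t where "y \<in> reach_t n m A y0 t" using y by (auto simp: reach_def)
    then have 1: "(y, y0) \<in> ?E\<^sup>*" by (rule to_y0[OF csum cpos cbal])
    obtain t' where "y' \<in> reach_t n m A y0 t'" using y' by (auto simp: reach_def)
    then have 2: "(y0, y') \<in> ?E\<^sup>*" by (rule y0_to)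
    show "\<exists>t. Pstep ?S ?P t y y' > 0" using path[OF rtrancl_trans[OF 1 2] y] .
  qed
qed

end
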